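(* If $X$ is a closed convex subset of $\mathbb{R}^n$, then $\mathit{HM}_2(X)=0$.
   Context: $X$ carries the Euclidean (subspace) metric. For a metric space $X$, the magnitude homology $\mathit{HM}^\ell_k(X)$ is the degree-$k$ homology of the chain complex whose $k$-chains in grading $\ell$ are the free abelian group on symbols $\langle x_0,\dots,x_k\rangle$ with $x_i\neq x_{i+1}$ and $d(x_0,x_1)+\cdots+d(x_{k-1},x_k)=\ell$, with boundary $\sum_i(-1)^i d^i$, where $d^i$ deletes $x_i$ if $d(x_{i-1},x_i)+d(x_i,x_{i+1})=d(x_{i-1},x_{i+1})$ and is $0$ otherwise (deleting an endpoint always gives $0$); $\mathit{HM}_2(X)=0$ means $\mathit{HM}^\ell_2(X)=0$ for all $\ell$. *)

theory Defs
  imports "HOL-Analysis.Analysis"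
begin

text \<open>Magnitude homology of a metric space (here: subset X of a metric space
with the subspace metric).\<close>

definition mag_gen :: "'a::metric_space set \<Rightarrow> nat \<Rightarrow> real \<Rightarrow> 'a list \<Rightarrow> bool" where
  "mag_gen X k l xs \<longleftrightarrow>
     length xs = Suc k \<and> set xs \<subseteq> X \<and>
     (\<forall>i<k. xs ! i \<noteq> xs ! Suc i) \<and>
     (\<Sum>i<k. dist (xs ! i) (xs ! Suc i)) = l"

definition mag_chain :: "'a::metric_space set \<Rightarrow> nat \<Rightarrow> real \<Rightarrow> ('a list \<Rightarrow> int) \<Rightarrow> bool" where
  "mag_chain X k l c \<longleftrightarrow>
     finite {xs. c xs \<noteq> 0} \<and> (\<forall>xs. c xs \<noteq> 0 \<longrightarrow> mag_gen X k l xs)"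

text \<open>Coefficient of ys in the boundary of the generator xs:
 sum over inner indices i (endpoints contribute 0) of (-1)^i d^i.\<close>
definition mag_bd_gen :: "'a::metric_space list \<Rightarrow> 'a list \<Rightarrow> int" where
  "mag_bd_gen xs ys =
     (\<Sum>i\<in>{1..<length xs - 1}.
        if dist (xs ! (i - 1)) (xs ! i) + dist (xs ! i) (xs ! Suc i) = dist (xs ! (i - 1)) (xs ! Suc i)
           \<and> ys = take i xs @ drop (Suc i) xs
        then (-1) ^ i else 0)"

definition mag_bd :: "('a::metric_space list \<Rightarrow> int) \<Rightarrow> ('a list \<Rightarrow> int)" where
  "mag_bd c = (\<lambda>ys. \<Sum>xs\<in>{xs. c xs \<noteq> 0}. c xs * mag_bd_gen xs ys)"

text \<open>HM^l_2(X) = 0 for all l: every 2-cycle of grading l is a boundary of a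
3-chain of grading l.\<close>
definition HM2_vanishes :: "'a::metric_space set \<Rightarrow> bool" where
  "HM2_vanishes X \<longleftrightarrow>
     (\<forall>l c. mag_chain X 2 l c \<and> mag_bd c = (\<lambda>_. 0) \<longrightarrow>
        (\<exists>b. mag_chain X 3 l b \<and> mag_bd b = c))"

end

theory Submission
  imports Defs
begin

lemma line_dist:
  fixes a d :: "'a::real_normed_vector"
  shows "dist (a + s *\<^sub>R d) (a + t *\<^sub>R d) = \<bar>s - t\<bar> * norm d"
proof -
  have "(a + s *\<^sub>R d) - (a + t *\<^sub>R d) = (s - t) *\<^sub>R d" by (simp add: algebra_simps)
  then show ?thesis by (simp add: dist_norm)
qed

lemma betw_param:
  fixes a p b :: "'a::euclidean_space"
  assumes "dist a p + dist p b = dist a b"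
  obtains u where "0 \<le> u" "u \<le> 1" "p = a + u *\<^sub>R (b - a)"
proof -
  have "between (a,b) p" using assms by (simp add: between)
  then obtain u where "0 \<le> u" "u \<le> 1" "p = (1 - u) *\<^sub>R a + u *\<^sub>R b" by (rule betweenE)
  moreover have "(1 - u) *\<^sub>R a + u *\<^sub>R b = a + u *\<^sub>R (b - a)" by (simp add: algebra_simps)
  ultimately show ?thesis using that by auto
qed

lemma midpoint_param:
  fixes a b :: "'a::real_normed_vector"
  shows "midpoint a b = a + (1/2) *\<^sub>R (b - a)"
  unfolding midpoint_def by (simp add: algebra_simps flip: scaleR_add_left)

lemma midpoint_mem:
  fixes a b :: "'a::real_normed_vector"
  assumes "convex X" "a \<in> X" "b \<in> X"
  shows "midpoint a b \<in> X"
  using closed_segment_subset[OF assms(2,3,1)] midpoint_in_closed_segment by blast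

lemma nondeg_not_betw:
  fixes a p b :: "'a::euclidean_space"
  assumes "dist a p + dist p b \<noteq> dist a b"
  shows "dist (midpoint a p) p + dist p b \<noteq> dist (midpoint a p) b"
proof
  assume h: "dist (midpoint a p) p + dist p b = dist (midpoint a p) b"
  have "between (midpoint a p, b) p" using h by (simp add: between)
  then obtain t where t: "0 \<le> t" "t \<le> 1" "p = (1 - t) *\<^sub>R midpoint a p + t *\<^sub>R b" by (rule betweenE)
  have e: "p = ((1-t)/2) *\<^sub>R a + ((1-t)/2) *\<^sub>R p + t *\<^sub>R b"
    using t(3) unfolding midpoint_def by (simp add: scaleR_add_right)
  have "((1 + t)/2) *\<^sub>R p = p - ((1-t)/2) *\<^sub>R p"
  proof -
    have h1: "(1 - (1-t)/2) *\<^sub>R p = p - ((1-t)/2) *\<^sub>R p" by (simp only: scaleR_diff_left scaleR_one)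
    have h2: "1 - (1-t)/2 = (1+t)/(2::real)" by (simp add: field_simps)
    show ?thesis using h1 unfolding h2 .
  qed
  also have "\<dots> = ((1-t)/2) *\<^sub>R a + t *\<^sub>R b" using arg_cong[OF e, of "\<lambda>x. x - ((1-t)/2) *\<^sub>R p"] by simp
  finally have f: "((1 + t)/2) *\<^sub>R p = ((1-t)/2) *\<^sub>R a + t *\<^sub>R b" .
  have k: "(2/(1+t)) * ((1+t)/2) = (1::real)" using t by (simp add: field_simps)
  have "p = (2/(1+t)) *\<^sub>R (((1 + t)/2) *\<^sub>R p)" by (simp only: scaleR_scaleR k scaleR_one)
  also have "\<dots> = (2/(1+t)) *\<^sub>R (((1-t)/2) *\<^sub>R a + t *\<^sub>R b)" using f by simp
  also have "\<dots> = ((1-t)/(1+t)) *\<^sub>R a + (2*t/(1+t)) *\<^sub>R b"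
  proof -
    have k1: "(2/(1+t)) * ((1-t)/2) = (1-t)/(1+t)" using t by (simp add: field_simps)
    have k2: "(2/(1+t)) * t = 2*t/(1+t)" using t by (simp add: field_simps)
    show ?thesis by (simp only: scaleR_add_right scaleR_scaleR k1 k2)
  qed
  finally have g: "p = ((1-t)/(1+t)) *\<^sub>R a + (2*t/(1+t)) *\<^sub>R b" .
  have "1 - 2*t/(1+t) = (1-t)/(1+t)" using t by (simp add: field_simps)
  then have "p = (1 - 2*t/(1+t)) *\<^sub>R a + (2*t/(1+t)) *\<^sub>R b" using g by simp
  then have "between (a,b) p" using t by (intro betweenI[of "2*t/(1+t)"]) (auto simp: field_simps)
  then show False using assms by (simp add: between)
qed

definition dl :: "'b \<Rightarrow> int \<Rightarrow> ('b \<Rightarrow> int)" where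
  "dl w s = (\<lambda>z. if z = w then s else 0)"

lemma mag_bd_dl: "mag_bd (dl w s) ys = s * mag_bd_gen w ys"
proof (cases "s = 0")
  case True
  then show ?thesis by (simp add: mag_bd_def dl_def)
next
  case False
  then have "{xs. dl w s xs \<noteq> 0} = {w}" by (auto simp: dl_def)
  then show ?thesis by (simp add: mag_bd_def dl_def)
qed

lemma mag_bd_zero: "mag_bd (\<lambda>_. 0) ys = 0"
  by (simp add: mag_bd_def)

lemma bd3: "mag_bd_gen [a,p,b] ys =
   (if dist a p + dist p b = dist a b \<and> ys = [a,b] then -1 else 0)"
proof -
  have e: "{1..<length [a,p,b] - 1} = {1::nat}" by auto
  show ?thesis unfolding mag_bd_gen_def e by simp
qed

lemma bd4: "mag_bd_gen [a,p,q,b] ys =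
   (if dist a p + dist p q = dist a q \<and> ys = [a,q,b] then -1 else 0) +
   (if dist p q + dist q b = dist p b \<and> ys = [a,p,b] then 1 else 0)"
proof -
  have "{1..<3::nat} = {1,2}" by auto
  then show ?thesis by (simp add: mag_bd_gen_def)
qed

lemma mag_gen4:
  "mag_gen X 3 l [a,p,q,b] \<longleftrightarrow> a \<in> X \<and> p \<in> X \<and> q \<in> X \<and> b \<in> X \<and> a \<noteq> p \<and> p \<noteq> q \<and> q \<noteq> b
     \<and> dist a p + dist p q + dist q b = l"
  by (auto simp: mag_gen_def numeral_3_eq_3 less_Suc_eq)

lemma mag_gen3:
  "mag_gen X 2 l [a,p,b] \<longleftrightarrow> a \<in> X \<and> p \<in> X \<and> b \<in> X \<and> a \<noteq> p \<and> p \<noteq> b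
     \<and> dist a p + dist p b = l"
  by (auto simp: mag_gen_def numeral_2_eq_2 less_Suc_eq)

lemma mag_chain_dl: "mag_gen X k l w \<Longrightarrow> mag_chain X k l (dl w s)"
  by (auto simp: mag_chain_def dl_def)

lemma mag_chain_zero: "mag_chain X k l (\<lambda>_. 0)"
  by (auto simp: mag_chain_def)

definition hh :: "('a::euclidean_space) list \<Rightarrow> ('a list \<Rightarrow> int)" where
  "hh g = (let a = g!0; p = g!1; b = g!2; m = midpoint a b in
     if dist a p + dist p b = dist a b then
       (if dist a p < dist a m then dl [a,p,m,b] 1
        else if dist a m < dist a p then dl [a,m,p,b] (-1) else (\<lambda>_. 0))
     else dl [a, midpoint a p, p, b] (-1))"

lemma hh_props:
  fixes a p b :: "'a::euclidean_space"
  assumes cx: "convex X" and g: "mag_gen X 2 l [a,p,b]"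
  shows "mag_chain X 3 l (hh [a,p,b]) \<and>
    mag_bd (hh [a,p,b]) ys = (if ys = [a,p,b] then 1 else 0)
      - (if dist a p + dist p b = dist a b \<and> ys = [a, midpoint a b, b] then 1 else 0)"
proof -
  from g have X: "a \<in> X" "p \<in> X" "b \<in> X" and ne: "a \<noteq> p" "p \<noteq> b" and L: "dist a p + dist p b = l"
    by (auto simp: mag_gen3)
  show ?thesis
  proof (cases "dist a p + dist p b = dist a b")
    case True
    obtain u where u: "0 \<le> u" "u \<le> 1" "p = a + u *\<^sub>R (b - a)" using betw_param[OF True] by blast
    define m where "m = midpoint a b"
    define N where "N = norm (b - a)"
    have mp: "m = a + (1/2) *\<^sub>R (b - a)" unfolding m_def by (rule midpoint_param)
    have mX: "m \<in> X" unfolding m_def using midpoint_mem[OF cx X(1) X(3)] .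
    have ab: "a \<noteq> b"
    proof
      assume "a = b"
      then have "dist p b = 0" using True by (simp add: dist_commute)
      then show False using ne by simp
    qed
    have Npos: "N > 0" unfolding N_def using ab by simp
    have aa: "a = a + 0 *\<^sub>R (b - a)" by simp
    have bb: "b = a + 1 *\<^sub>R (b - a)" by simp
    have dap: "dist a p = u * N" using line_dist[of a 0 "b - a" u] u unfolding N_def by simp
    have dam: "dist a m = N/2" using line_dist[of a 0 "b - a" "1/2"] mp unfolding N_def by simp
    have dpm: "dist p m = \<bar>u - 1/2\<bar> * N" using line_dist[of a u "b - a" "1/2"] mp u(3) unfolding N_def by simp
    have "dist m b = dist (a + (1/2) *\<^sub>R (b - a)) (a + 1 *\<^sub>R (b - a))" by (simp add: mp)
    also have "\<dots> = N/2" unfolding line_dist N_def by simp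
    finally have dmb: "dist m b = N/2" .
    have "dist p b = dist (a + u *\<^sub>R (b - a)) (a + 1 *\<^sub>R (b - a))" by (simp add: u(3))
    also have "\<dots> = (1 - u) * N" unfolding line_dist N_def using u by simp
    finally have dpb: "dist p b = (1 - u) * N" .
    have dab: "dist a b = N" unfolding N_def by (simp add: dist_norm norm_minus_commute)
    consider "u < 1/2" | "u > 1/2" | "u = 1/2" by linarith
    then show ?thesis
    proof cases
      case 1
      have "u * N < (1/2) * N" using 1 Npos by (intro mult_strict_right_mono) auto
      then have lt: "dist a p < dist a m" using dap dam by simp
      have hv: "hh [a,p,b] = dl [a,p,m,b] 1" using True lt
        by (simp add: hh_def Let_def flip: m_def)
      have dpm1: "dist p m = (1/2 - u) * N" using dpm 1 by simp
      have b1: "dist a p + dist p m = dist a m" unfolding dap dpm1 dam by (simp add: algebra_simps)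
      have b2: "dist p m + dist m b = dist p b" unfolding dpm1 dmb dpb by (simp add: algebra_simps)
      have "mag_gen X 3 l [a,p,m,b]" unfolding mag_gen4
        using X mX ne dpm dmb Npos 1 b2 L by auto
      then show ?thesis using hv b1 b2 True by (auto simp: mag_bd_dl bd4 mag_chain_dl m_def)
    next
      case 2
      have "(1/2) * N < u * N" using 2 Npos by (intro mult_strict_right_mono) auto
      then have lt: "dist a m < dist a p" using dap dam by simp
      have hv: "hh [a,p,b] = dl [a,m,p,b] (-1)" using True lt
        by (simp add: hh_def Let_def flip: m_def)
      have dpm1: "dist m p = (u - 1/2) * N" using dpm 2 by (simp add: dist_commute)
      have b1: "dist a m + dist m p = dist a p" unfolding dap dpm1 dam by (simp add: algebra_simps)
      have b2: "dist m p + dist p b = dist m b" unfolding dpm1 dmb dpb by (simp add: algebra_simps)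
      have "dist m p > 0" using dpm 2 Npos by (simp add: dist_commute)
      then have "mag_gen X 3 l [a,m,p,b]" unfolding mag_gen4
        using X mX ne dam Npos b1 L by auto
      then show ?thesis using hv b1 b2 True by (auto simp: mag_bd_dl bd4 mag_chain_dl m_def)
    next
      case 3
      have lt: "dist a m = dist a p" using dap dam 3 Npos by simp
      have hv: "hh [a,p,b] = (\<lambda>_. 0)" using True lt
        by (simp add: hh_def Let_def flip: m_def)
      have "p = m" using 3 u(3) mp by simp
      then show ?thesis using hv True by (simp add: mag_bd_zero mag_chain_zero m_def)
    qed
  next
    case False
    define q where "q = midpoint a p"
    have hv: "hh [a,p,b] = dl [a,q,p,b] (-1)" using False by (simp add: hh_def Let_def q_def)
    have qX: "q \<in> X" unfolding q_def using midpoint_mem[OF cx X(1) X(2)] .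
    have d1: "dist a q = dist a p / 2" "dist q p = dist a p / 2" unfolding q_def by (simp_all add: dist_midpoint)
    have pos: "dist a p > 0" using ne by simp
    have b1: "dist a q + dist q p = dist a p" using d1 by simp
    have b2: "\<not> (dist q p + dist p b = dist q b)" unfolding q_def by (rule nondeg_not_betw[OF False])
    have "mag_gen X 3 l [a,q,p,b]" unfolding mag_gen4
      using X qX ne d1 pos L by auto
    then show ?thesis using hv b1 b2 False by (auto simp: mag_bd_dl bd4 mag_chain_dl)
  qed
qed

lemma mag_bd_superset:
  assumes "finite T" "{xs. f xs \<noteq> 0} \<subseteq> T"
  shows "mag_bd f ys = (\<Sum>xs\<in>T. f xs * mag_bd_gen xs ys)"
  unfolding mag_bd_def using assms by (intro sum.mono_neutral_left) auto

lemma len3: "length g = 3 \<Longrightarrow> g = [g!0, g!1, g!2]"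
  by (auto simp: numeral_3_eq_3 length_Suc_conv)

theorem corollary7p23:
  fixes X :: "(real ^ 'n) set"
  assumes "closed X" and "convex X"
  shows "HM2_vanishes X"
  unfolding HM2_vanishes_def
proof (intro allI impI, elim conjE)
  fix l c
  assume cc: "mag_chain X 2 l c" and cyc: "mag_bd c = (\<lambda>_. 0)"
  define S where "S = {xs. c xs \<noteq> 0}"
  have fS: "finite S" using cc by (simp add: mag_chain_def S_def)
  have gS: "\<And>g. g \<in> S \<Longrightarrow> mag_gen X 2 l g" using cc by (simp add: mag_chain_def S_def)
  have g3: "\<And>g. g \<in> S \<Longrightarrow> g = [g!0, g!1, g!2]"
    using gS by (intro len3) (simp add: mag_gen_def)
  define D where "D g ys = (if dist (g!0) (g!1) + dist (g!1) (g!2) = dist (g!0) (g!2)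
      \<and> ys = [g!0, midpoint (g!0) (g!2), g!2] then 1 else (0::int))" for g ys :: "(real^'n) list"
  have hhp: "mag_chain X 3 l (hh g) \<and> mag_bd (hh g) ys = (if ys = g then 1 else 0) - D g ys"
    if "g \<in> S" for g ys
  proof -
    have e: "g = [g!0, g!1, g!2]" using g3 that .
    have "mag_gen X 2 l [g!0, g!1, g!2]" using gS that e by simp
    from hh_props[OF assms(2) this, of ys] show ?thesis
      unfolding D_def by (subst (1 2 3 4) e) simp
  qed
  define T where "T = (\<Union>g\<in>S. {zs. hh g zs \<noteq> 0})"
  have fT: "finite T" unfolding T_def using fS hhp by (auto simp: mag_chain_def)
  define bb where "bb = (\<lambda>zs. \<Sum>g\<in>S. c g * hh g zs)"
  have nz: "\<exists>g\<in>S. hh g zs \<noteq> 0" if "bb zs \<noteq> 0" for zs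
  proof (rule ccontr)
    assume "\<not> ?thesis"
    then have "bb zs = 0" unfolding bb_def by (intro sum.neutral) auto
    then show False using that by simp
  qed
  have suppb: "{zs. bb zs \<noteq> 0} \<subseteq> T" unfolding T_def using nz by auto
  show "\<exists>b. mag_chain X 3 l b \<and> mag_bd b = c"
  proof (intro exI conjI)
    show "mag_chain X 3 l bb"
      unfolding mag_chain_def
    proof (intro conjI allI impI)
      show "finite {xs. bb xs \<noteq> 0}" using fT suppb by (rule finite_subset[rotated])
    next
      fix zs assume "bb zs \<noteq> 0"
      then obtain g where "g \<in> S" "hh g zs \<noteq> 0" using nz by blast
      then show "mag_gen X 3 l zs" using hhp[of g] by (auto simp: mag_chain_def)
    qed
  next
    show "mag_bd bb = c"
    proof
      fix ys
      have "mag_bd bb ys = (\<Sum>zs\<in>T. bb zs * mag_bd_gen zs ys)"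
        by (rule mag_bd_superset[OF fT suppb])
      also have "\<dots> = (\<Sum>zs\<in>T. \<Sum>g\<in>S. c g * (hh g zs * mag_bd_gen zs ys))"
        unfolding bb_def by (simp add: sum_distrib_right mult.assoc)
      also have "\<dots> = (\<Sum>g\<in>S. c g * (\<Sum>zs\<in>T. hh g zs * mag_bd_gen zs ys))"
        by (subst sum.swap) (simp add: sum_distrib_left)
      also have "\<dots> = (\<Sum>g\<in>S. c g * mag_bd (hh g) ys)"
      proof (rule sum.cong[OF refl])
        fix g assume "g \<in> S"
        then have "{zs. hh g zs \<noteq> 0} \<subseteq> T" unfolding T_def by auto
        then show "c g * (\<Sum>zs\<in>T. hh g zs * mag_bd_gen zs ys) = c g * mag_bd (hh g) ys"
          using mag_bd_superset[OF fT] by simp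
      qed
      also have "\<dots> = (\<Sum>g\<in>S. c g * (if ys = g then 1 else 0)) - (\<Sum>g\<in>S. c g * D g ys)"
        using hhp by (simp add: right_diff_distrib sum_subtractf)
      also have "(\<Sum>g\<in>S. c g * (if ys = g then 1 else 0)) = c ys"
      proof -
        have "(\<Sum>g\<in>S. c g * (if ys = g then 1 else 0)) = (\<Sum>g\<in>S. if ys = g then c g else 0)"
          by (rule sum.cong) auto
        also have "\<dots> = (if ys \<in> S then c ys else 0)" using fS by (simp add: sum.delta)
        also have "\<dots> = c ys" by (auto simp: S_def)
        finally show ?thesis .
      qed
      also have "(\<Sum>g\<in>S. c g * D g ys) = 0"
      proof -
        define P where "P = (length ys = 3 \<and> ys!1 = midpoint (ys!0) (ys!2))"
        have per: "c g * D g ys = (if P then - (c g * mag_bd_gen g [ys!0, ys!2]) else 0)"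
          if "g \<in> S" for g
        proof -
          have e: "g = [g!0, g!1, g!2]" using g3 that .
          show ?thesis
          proof (cases P)
            case True
            then have ey: "ys = [ys!0, midpoint (ys!0) (ys!2), ys!2]" unfolding P_def
              using len3[of ys] by auto
            have "(ys = [g!0, midpoint (g!0) (g!2), g!2]) = ([ys!0, ys!2] = [g!0, g!2])"
              by (subst ey, auto)
            then show ?thesis using True unfolding D_def by (subst (1 2 3) e) (simp add: bd3)
          next
            case False
            have "ys \<noteq> [g!0, midpoint (g!0) (g!2), g!2]" using False unfolding P_def by auto
            then show ?thesis using False unfolding D_def by simp
          qed
        qed
        have "(\<Sum>g\<in>S. c g * D g ys) = (\<Sum>g\<in>S. if P then - (c g * mag_bd_gen g [ys!0, ys!2]) else 0)"
          using per by (rule sum.cong[OF refl])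
        also have "\<dots> = (if P then - mag_bd c [ys!0, ys!2] else 0)"
          by (simp add: mag_bd_def S_def sum_negf)
        also have "\<dots> = 0" using cyc by simp
        finally show ?thesis .
      qed
      finally show "mag_bd bb ys = c ys" by simp
    qed
  qed
qed

end
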